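(* Let $(f,L)$ satisfy the usual conditions and suppose $S=S^{f,L}>0$. Let $L_0=\frac{\pi}{2\sqrt S}\vee1$, define $\tilde L(t)=L(t)$ if $L(t)\le L_0$ and $\tilde L(t)=L_0+(L(t)-L_0)e^{-(L(t)-L_0)^2}$ if $L(t)>L_0$, and $\tilde f(t)=f(t)+L(t)-\tilde L(t)$. Then the pair $(\tilde f,\tilde L)$ satisfies conditions (II), (III) and (IV), and $S^{\tilde f,\tilde L}\ge S^{f,L}/2>0$.
   Context: For twice continuously differentiable $g:[0,\infty)\to\mathbb R$ and $M:[0,\infty)\to(0,\infty)$ and a constant $r>0$, set $E^{g,M}(t)=|g'(t)|M(t)+\int_0^t|g''(s)|M(s)ds+\frac12|M'(t)|M(t)+\frac12\int_0^t|M''(s)|M(s)ds$ and $S^{g,M}=\liminf_{t\to\infty}\frac1t\int_0^t\big(r-\frac12 g'(s)^2-\frac{\pi^2}{8M(s)^2}+\frac{M'(s)}{2M(s)}\big)ds$. The pair $(g,M)$ satisfies the usual conditions if (I) $g(0)=0$; (II) $g$ and $M$ are twice continuously differentiable; (III) $E^{g,M}(t)/t\to0$ as $t\to\infty$; (IV) $S^{g,M}\in(-\infty,\infty)$. *)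

theory Defs
  imports "HOL-Analysis.Analysis"
begin

text \<open>Functions on [0,\<infinity>) are modelled as real \<Rightarrow> real; only values on {0..} matter.
  Derivatives are taken within {0..} (one-sided at 0).\<close>

definition d1 :: "(real \<Rightarrow> real) \<Rightarrow> real \<Rightarrow> real" where
  "d1 g t = vector_derivative g (at t within {0..})"

definition d2 :: "(real \<Rightarrow> real) \<Rightarrow> real \<Rightarrow> real" where
  "d2 g = d1 (d1 g)"

definition C2_nonneg :: "(real \<Rightarrow> real) \<Rightarrow> bool" where
  "C2_nonneg g \<longleftrightarrow>
     (\<forall>t\<ge>0. g differentiable (at t within {0..})) \<and>
     (\<forall>t\<ge>0. d1 g differentiable (at t within {0..})) \<and>
     continuous_on {0..} (d2 g)"

definition E_fun :: "(real \<Rightarrow> real) \<Rightarrow> (real \<Rightarrow> real) \<Rightarrow> real \<Rightarrow> real" where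
  "E_fun g M t = \<bar>d1 g t\<bar> * M t + integral {0..t} (\<lambda>s. \<bar>d2 g s\<bar> * M s)
      + 1/2 * \<bar>d1 M t\<bar> * M t + 1/2 * integral {0..t} (\<lambda>s. \<bar>d2 M s\<bar> * M s)"

definition S_val :: "real \<Rightarrow> (real \<Rightarrow> real) \<Rightarrow> (real \<Rightarrow> real) \<Rightarrow> ereal" where
  "S_val r g M = Liminf at_top (\<lambda>t. ereal (1 / t * integral {0..t}
      (\<lambda>s. r - 1/2 * (d1 g s)^2 - pi^2 / (8 * (M s)^2) + d1 M s / (2 * M s))))"

definition cond_I :: "(real \<Rightarrow> real) \<Rightarrow> bool" where
  "cond_I g \<longleftrightarrow> g 0 = 0"

definition cond_II :: "(real \<Rightarrow> real) \<Rightarrow> (real \<Rightarrow> real) \<Rightarrow> bool" where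
  "cond_II g M \<longleftrightarrow> C2_nonneg g \<and> C2_nonneg M"

definition cond_III :: "(real \<Rightarrow> real) \<Rightarrow> (real \<Rightarrow> real) \<Rightarrow> bool" where
  "cond_III g M \<longleftrightarrow> ((\<lambda>t. E_fun g M t / t) \<longlongrightarrow> 0) at_top"

definition cond_IV :: "real \<Rightarrow> (real \<Rightarrow> real) \<Rightarrow> (real \<Rightarrow> real) \<Rightarrow> bool" where
  "cond_IV r g M \<longleftrightarrow> \<bar>S_val r g M\<bar> \<noteq> \<infinity>"

definition usual_conditions :: "real \<Rightarrow> (real \<Rightarrow> real) \<Rightarrow> (real \<Rightarrow> real) \<Rightarrow> bool" where
  "usual_conditions r g M \<longleftrightarrow> (\<forall>t\<ge>0. M t > 0) \<and>
     cond_I g \<and> cond_II g M \<and> cond_III g M \<and> cond_IV r g M"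

end

theory Submission
  imports Defs "HOL-Real_Asymp.Real_Asymp"
begin


lemma deriv_piecewise:
  fixes g h :: "real \<Rightarrow> real"
  assumes g: "(g has_real_derivative d) (at a)" and h: "(h has_real_derivative d) (at a)" and e: "g a = h a"
  shows "((\<lambda>x. if x \<le> a then g x else h x) has_real_derivative d) (at a)"
proof -
  let ?f = "\<lambda>x. if x \<le> a then g x else h x"
  have gl: "((\<lambda>y. (g y - g a) / (y - a)) \<longlongrightarrow> d) (at_left a)"
    using g unfolding has_field_derivative_iff filterlim_at_split by simp
  have hr: "((\<lambda>y. (h y - h a) / (y - a)) \<longlongrightarrow> d) (at_right a)"
    using h unfolding has_field_derivative_iff filterlim_at_split by simp
  have 1: "((\<lambda>y. (?f y - ?f a) / (y - a)) \<longlongrightarrow> d) (at_left a)"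
    using gl by (rule Lim_transform_eventually) (auto simp: eventually_at_left_field intro: exI[of _ "a - 1"])
  have 2: "((\<lambda>y. (?f y - ?f a) / (y - a)) \<longlongrightarrow> d) (at_right a)"
    using hr by (rule Lim_transform_eventually) (auto simp: e eventually_at_right_field intro: exI[of _ "a + 1"])
  show ?thesis unfolding has_field_derivative_iff using 1 2 by (simp add: filterlim_at_split)
qed

lemma deriv_piecewise2:
  fixes g h :: "real \<Rightarrow> real"
  assumes g: "\<And>x. (g has_real_derivative g' x) (at x)" and h: "\<And>x. (h has_real_derivative h' x) (at x)"
    and e: "g a = h a" "g' a = h' a"
  shows "((\<lambda>x. if x \<le> a then g x else h x) has_real_derivative (if x \<le> a then g' x else h' x)) (at x)"
proof (cases x a rule: linorder_cases)
  case less
  show ?thesis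
    apply (rule has_field_derivative_transform_within_open[of g _ x "{..<a}"])
    using less g[of x] by auto
next
  case equal
  have "(h has_real_derivative g' a) (at a)" using h[of a] e(2) by simp
  from deriv_piecewise[OF g[of a] this e(1)] show ?thesis using equal by simp
next
  case greater
  show ?thesis
    apply (rule has_field_derivative_transform_within_open[of h _ x "{a<..}"])
    using greater h[of x] by auto
qed

definition phi :: "real \<Rightarrow> real \<Rightarrow> real" where
  "phi c x = (if x \<le> c then x else c + (x - c) * exp (- ((x - c)^2)))"
definition phi1 :: "real \<Rightarrow> real \<Rightarrow> real" where
  "phi1 c x = (if x \<le> c then 1 else (1 - 2 * (x - c)^2) * exp (- ((x - c)^2)))"
definition phi2 :: "real \<Rightarrow> real \<Rightarrow> real" where
  "phi2 c x = (if x \<le> c then 0 else (4 * (x - c)^3 - 6 * (x - c)) * exp (- ((x - c)^2)))"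

lemma phi_deriv: "(phi c has_real_derivative phi1 c x) (at x)"
proof -
  have "((\<lambda>x. if x \<le> c then x else c + (x - c) * exp (- ((x - c)^2))) has_real_derivative
     (if x \<le> c then 1 else (1 - 2 * (x - c)^2) * exp (- ((x - c)^2)))) (at x)"
    apply (rule deriv_piecewise2)
    apply (auto intro!: derivative_eq_intros)
    apply (simp add: algebra_simps power2_eq_square)
    done
  then show ?thesis unfolding phi_def[abs_def] phi1_def .
qed

lemma phi1_deriv: "(phi1 c has_real_derivative phi2 c x) (at x)"
proof -
  have "((\<lambda>x. if x \<le> c then 1 else (1 - 2 * (x - c)^2) * exp (- ((x - c)^2))) has_real_derivative
     (if x \<le> c then 0 else (4 * (x - c)^3 - 6 * (x - c)) * exp (- ((x - c)^2)))) (at x)"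
    apply (rule deriv_piecewise2)
    apply (auto intro!: derivative_eq_intros)
    apply (simp add: algebra_simps power2_eq_square power3_eq_cube)
    done
  then show ?thesis unfolding phi1_def[abs_def] phi2_def .
qed

lemma phi2_cont: "isCont (phi2 c) x"
proof -
  have "isCont (\<lambda>x. if x \<le> c then 0 else (4 * (x - c)^3 - 6 * (x - c)) * exp (- ((x - c)^2))) x"
  proof (cases x c rule: linorder_cases)
    case less
    have "eventually (\<lambda>y. y \<in> {..<c}) (nhds x)" by (rule eventually_nhds_in_open) (use less in auto)
    then have "eventually (\<lambda>y. (if y \<le> c then 0 else (4 * (y - c)^3 - 6 * (y - c)) * exp (- ((y - c)^2))) = (0::real)) (nhds x)"
      by eventually_elim auto
    then show ?thesis by (subst isCont_cong) auto
  next
    case equal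
    show ?thesis unfolding equal
      by (rule isCont_If_ge) (auto intro!: tendsto_eq_intros)
  next
    case greater
    have "isCont (\<lambda>x. (4 * (x - c)^3 - 6 * (x - c)) * exp (- ((x - c)^2))) x" by (intro continuous_intros)
    moreover have "eventually (\<lambda>y. y \<in> {c<..}) (nhds x)" by (rule eventually_nhds_in_open) (use greater in auto)
    then have "eventually (\<lambda>y. (if y \<le> c then 0 else (4 * (y - c)^3 - 6 * (y - c)) * exp (- ((y - c)^2))) = (4 * (y - c)^3 - 6 * (y - c)) * exp (- ((y - c)^2))) (nhds x)"
      by eventually_elim auto
    ultimately show ?thesis by (subst isCont_cong) auto
  qed
  then show ?thesis unfolding phi2_def[abs_def] .
qed



lemma exp_quad: fixes v :: real assumes "v \<ge> 0" shows "exp v \<ge> (1 + v/2)^2"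
proof -
  have "exp v = exp (v/2)^2" by (simp add: power2_eq_square flip: exp_add)
  moreover have "1 + v/2 \<le> exp (v/2)" by (rule exp_ge_add_one_self)
  ultimately show ?thesis using assms by (simp add: power_mono)
qed

lemma exp_neg_quad: fixes v :: real assumes "v \<ge> 0" shows "exp (-v) * (1 + v/2)^2 \<le> 1"
proof -
  have "exp (-v) * (1 + v/2)^2 \<le> exp (-v) * exp v" using exp_quad[OF assms] by (intro mult_left_mono) auto
  then show ?thesis by (simp flip: exp_add)
qed

lemma aux0: fixes u :: real assumes "u > 0" shows "u * exp (-(u^2)) \<le> u"
  using assms by (intro mult_left_le) auto

lemma aux1: fixes u :: real assumes u: "u > 0" shows "u * exp (-(u^2)) \<le> 1"
proof -
  define v where "v = u^2"
  have v: "v \<ge> 0" by (simp add: v_def)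
  have e: "exp (-v) * (1 + v/2)^2 \<le> 1" by (rule exp_neg_quad[OF v])
  have s: "(u - 1)^2 \<ge> 0" by simp
  have "u \<le> 1 + v/2" using s unfolding v_def power2_diff by simp
  also have "\<dots> \<le> (1 + v/2)^2" using v by (simp add: power2_eq_square)
  finally have "u \<le> (1 + v/2)^2" .
  then have m: "u * exp (-v) \<le> (1 + v/2)^2 * exp (-v)" by (intro mult_right_mono) auto
  have "u * exp (-v) \<le> 1" using m e by (metis mult.commute order_trans)
  then show ?thesis unfolding v_def .
qed

lemma aux2: fixes u :: real shows "\<bar>(1 - 2*u^2) * exp (-(u^2))\<bar> \<le> 1"
proof -
  define v where "v = u^2"
  have v: "v \<ge> 0" by (simp add: v_def)
  have e1: "exp (- v) \<le> 1" using v by simp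
  have e2: "exp (-v) * (1 + v/2)^2 \<le> 1" by (rule exp_neg_quad[OF v])
  have s: "(v/2 - 1)^2 \<ge> 0" by simp
  have q: "2 * v - 1 \<le> (1 + v/2)^2" using s unfolding power2_diff power2_sum by (simp add: power2_eq_square)
  have "(1 - 2 * v) * exp (- v) \<le> 1 * exp (-v)" using v by (intro mult_right_mono) auto
  with e1 have a: "(1 - 2 * v) * exp (- v) \<le> 1" by linarith
  have "(2 * v - 1) * exp (- v) \<le> (1 + v/2)^2 * exp (-v)" using q by (intro mult_right_mono) auto
  with e2 have b: "(2 * v - 1) * exp (- v) \<le> 1" by (metis mult.commute order_trans)
  have "abs ((1 - 2 * v) * exp (- v)) \<le> 1" using a b by (simp add: abs_le_iff algebra_simps)
  then show ?thesis unfolding v_def .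
qed

lemma aux3: fixes u :: real assumes u: "u > 0" shows "\<bar>(4*u^3 - 6*u) * exp (-(u^2))\<bar> \<le> 8"
proof -
  define v where "v = u^2"
  have v: "v \<ge> 0" by (simp add: v_def)
  have e2: "exp (-v) * (1 + v/2)^2 \<le> 1" by (rule exp_neg_quad[OF v])
  have s1: "2 * u^2 * (u - 1)^2 \<ge> 0" by simp
  have a: "4 * u^3 \<le> 2 * u^2 + 2 * u^4" using s1 unfolding power2_diff
    by (simp add: algebra_simps power2_eq_square power3_eq_cube power4_eq_xxxx)
  have s2: "3 * (u - 1)^2 \<ge> 0" by simp
  have b: "6 * u \<le> 3 + 3 * u^2" using s2 unfolding power2_diff by (simp add: algebra_simps)
  have "\<bar>4 * u^3 - 6 * u\<bar> \<le> 4 * u^3 + 6 * u" using u by (simp add: abs_le_iff)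
  also have "\<dots> \<le> 3 + 5 * u^2 + 2 * u^4" using a b by simp
  also have "\<dots> \<le> 8 * (1 + v/2)^2" unfolding v_def by (simp add: power2_eq_square power4_eq_xxxx algebra_simps)
  finally have q: "\<bar>4 * u^3 - 6 * u\<bar> \<le> 8 * (1 + v/2)^2" .
  have "\<bar>(4 * u^3 - 6 * u) * exp (- v)\<bar> = \<bar>4 * u^3 - 6 * u\<bar> * exp (- v)" by (simp add: abs_mult)
  also have "\<dots> \<le> 8 * (1 + v/2)^2 * exp (- v)" using q by (intro mult_right_mono) auto
  also have "\<dots> \<le> 8" using e2 by (simp add: mult.commute mult.left_commute)
  finally show ?thesis unfolding v_def .
qed

lemma phi_le: "phi c x \<le> x"
proof (cases "x \<le> c")
  case False
  then have "x - c > 0" by simp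
  have "phi c x = c + (x-c)*exp(-((x-c)^2))" using False by (simp add: phi_def)
  with aux0[OF \<open>x - c > 0\<close>] show ?thesis by linarith
qed (simp add: phi_def)

lemma phi_ge: "x > c \<Longrightarrow> phi c x \<ge> c"
  by (simp add: phi_def)

lemma phi_le2: "phi c x \<le> c + 1"
proof (cases "x \<le> c")
  case False
  then have "x - c > 0" by simp
  have "phi c x = c + (x-c)*exp(-((x-c)^2))" using False by (simp add: phi_def)
  with aux1[OF \<open>x - c > 0\<close>] show ?thesis by linarith
qed (simp add: phi_def)

lemma phi1_bound: "\<bar>phi1 c x\<bar> \<le> 1"
  using aux2[of "x - c"] by (simp add: phi1_def)

lemma phi2_bound: "\<bar>phi2 c x\<bar> \<le> 8"
proof (cases "x \<le> c")
  case False
  then have "x - c > 0" by simp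
  from aux3[OF this] show ?thesis using False by (simp add: phi2_def)
qed (simp add: phi2_def)




lemma nontriv: assumes "(t::real) \<ge> 0" shows "at t within {0..} \<noteq> bot"
proof -
  have "t islimpt {t..t+1}" by simp
  then have "t islimpt {0..}" by (rule islimpt_subset) (use assms in auto)
  then show ?thesis using trivial_limit_within by blast
qed

lemma d1_eq: assumes "t \<ge> 0" "(g has_real_derivative D) (at t within {0..})" shows "d1 g t = D"
  unfolding d1_def using assms nontriv vector_derivative_within has_real_derivative_iff_has_vector_derivative by blast

lemma C2_d1: assumes "C2_nonneg g" "t \<ge> 0" shows "(g has_real_derivative d1 g t) (at t within {0..})"
  using assms unfolding C2_nonneg_def d1_def has_real_derivative_iff_has_vector_derivative
  using vector_derivative_works by blast

lemma C2_d2: assumes "C2_nonneg g" "t \<ge> 0" shows "(d1 g has_real_derivative d2 g t) (at t within {0..})"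
  using assms unfolding C2_nonneg_def d2_def d1_def[of "d1 g"] has_real_derivative_iff_has_vector_derivative
  using vector_derivative_works by blast

lemma C2_cont0: assumes "C2_nonneg g" shows "continuous_on {0..} g"
  unfolding continuous_on_eq_continuous_within
  using assms differentiable_imp_continuous_within unfolding C2_nonneg_def by auto

lemma C2_cont1: assumes "C2_nonneg g" shows "continuous_on {0..} (d1 g)"
  unfolding continuous_on_eq_continuous_within
  using assms unfolding C2_nonneg_def by (auto intro!: differentiable_imp_continuous_within)

lemma C2_cont2: assumes "C2_nonneg g" shows "continuous_on {0..} (d2 g)"
  using assms unfolding C2_nonneg_def by auto

lemma C2_intro:
  assumes "\<And>t. t \<ge> 0 \<Longrightarrow> (g has_real_derivative g1 t) (at t within {0..})"
    and "\<And>t. t \<ge> 0 \<Longrightarrow> (g1 has_real_derivative g2 t) (at t within {0..})"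
    and "continuous_on {0..} g2"
  shows "C2_nonneg g" "\<And>t. t \<ge> 0 \<Longrightarrow> d1 g t = g1 t" "\<And>t. t \<ge> 0 \<Longrightarrow> d2 g t = g2 t"
proof -
  have e1: "\<And>t. t \<ge> 0 \<Longrightarrow> d1 g t = g1 t" using assms(1) d1_eq by blast
  have t2: "(d1 g has_real_derivative g2 t) (at t within {0..})" if "t \<ge> 0" for t
    by (rule has_field_derivative_transform_within[OF assms(2)[OF that], of 1]) (use that e1 in auto)
  have e2: "\<And>t. t \<ge> 0 \<Longrightarrow> d2 g t = g2 t" unfolding d2_def using t2 d1_eq by blast
  show "\<And>t. t \<ge> 0 \<Longrightarrow> d1 g t = g1 t" by (fact e1)
  show "\<And>t. t \<ge> 0 \<Longrightarrow> d2 g t = g2 t" by (fact e2)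
  show "C2_nonneg g" unfolding C2_nonneg_def
  proof (intro conjI allI impI)
    fix t :: real assume "t \<ge> 0"
    show "g differentiable at t within {0..}"
      using assms(1)[OF \<open>t \<ge> 0\<close>] unfolding has_field_derivative_def by (rule differentiableI)
    show "d1 g differentiable at t within {0..}"
      using t2[OF \<open>t \<ge> 0\<close>] unfolding has_field_derivative_def by (rule differentiableI)
  next
    show "continuous_on {0..} (d2 g)" using assms(3) by (rule continuous_on_cong[THEN iffD2, rotated 2]) (auto simp: e2)
  qed
qed

lemma C2_comp:
  assumes L: "C2_nonneg L"
    and p: "\<And>x. (p has_real_derivative p1 x) (at x)"
    and p1: "\<And>x. (p1 has_real_derivative p2 x) (at x)"
    and p2: "\<And>x. isCont p2 x"
  shows "C2_nonneg (\<lambda>t. p (L t))"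
    "\<And>t. t \<ge> 0 \<Longrightarrow> d1 (\<lambda>t. p (L t)) t = p1 (L t) * d1 L t"
    "\<And>t. t \<ge> 0 \<Longrightarrow> d2 (\<lambda>t. p (L t)) t = p2 (L t) * (d1 L t)^2 + p1 (L t) * d2 L t"
proof -
  have h1: "((\<lambda>t. p (L t)) has_real_derivative p1 (L t) * d1 L t) (at t within {0..})" if "t \<ge> 0" for t
    using DERIV_chain'[OF C2_d1[OF L that] p] .
  have h2: "((\<lambda>t. p1 (L t) * d1 L t) has_real_derivative p2 (L t) * (d1 L t)^2 + p1 (L t) * d2 L t) (at t within {0..})" if "t \<ge> 0" for t
  proof -
    have a: "((\<lambda>t. p1 (L t)) has_real_derivative p2 (L t) * d1 L t) (at t within {0..})"
      using DERIV_chain'[OF C2_d1[OF L that] p1] .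
    have "((\<lambda>t. p1 (L t) * d1 L t) has_real_derivative (p2 (L t) * d1 L t) * d1 L t + p1 (L t) * d2 L t) (at t within {0..})"
      using DERIV_mult[OF a C2_d2[OF L that]] by (simp add: algebra_simps)
    then show ?thesis by (simp add: power2_eq_square algebra_simps)
  qed
  have c: "continuous_on {0..} (\<lambda>t. p2 (L t) * (d1 L t)^2 + p1 (L t) * d2 L t)"
  proof -
    have cL: "continuous_on {0..} L" by (rule C2_cont0[OF L])
    have cp2: "continuous_on {0..} (\<lambda>t. p2 (L t))"
      by (rule continuous_on_compose2[OF _ cL, of UNIV]) (auto intro: continuous_at_imp_continuous_on p2)
    have cp1: "continuous_on {0..} (\<lambda>t. p1 (L t))"
      by (rule continuous_on_compose2[OF _ cL, of UNIV]) (auto intro!: continuous_at_imp_continuous_on DERIV_isCont p1)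
    show ?thesis using cp1 cp2 C2_cont1[OF L] C2_cont2[OF L] by (intro continuous_intros)
  qed
  note r = C2_intro[of "\<lambda>t. p (L t)" "\<lambda>t. p1 (L t) * d1 L t" "\<lambda>t. p2 (L t) * (d1 L t)^2 + p1 (L t) * d2 L t", OF h1 h2 c]
  show "C2_nonneg (\<lambda>t. p (L t))" by (rule C2_intro(1)[OF h1 h2 c])
  show "\<And>t. t \<ge> 0 \<Longrightarrow> d1 (\<lambda>t. p (L t)) t = p1 (L t) * d1 L t" by (rule C2_intro(2)[OF h1 h2 c])
  show "\<And>t. t \<ge> 0 \<Longrightarrow> d2 (\<lambda>t. p (L t)) t = p2 (L t) * (d1 L t)^2 + p1 (L t) * d2 L t" by (rule C2_intro(3)[OF h1 h2 c])
qed

lemma C2_diff: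
  assumes f: "C2_nonneg f" and g: "C2_nonneg g" and h: "C2_nonneg h"
  shows "C2_nonneg (\<lambda>t. f t + g t - h t)"
    "\<And>t. t \<ge> 0 \<Longrightarrow> d1 (\<lambda>t. f t + g t - h t) t = d1 f t + d1 g t - d1 h t"
    "\<And>t. t \<ge> 0 \<Longrightarrow> d2 (\<lambda>t. f t + g t - h t) t = d2 f t + d2 g t - d2 h t"
proof -
  have h1: "((\<lambda>t. f t + g t - h t) has_real_derivative d1 f t + d1 g t - d1 h t) (at t within {0..})" if "t \<ge> 0" for t
    using C2_d1[OF f that] C2_d1[OF g that] C2_d1[OF h that] by (intro derivative_intros)
  have h2: "((\<lambda>t. d1 f t + d1 g t - d1 h t) has_real_derivative d2 f t + d2 g t - d2 h t) (at t within {0..})" if "t \<ge> 0" for t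
    using C2_d2[OF f that] C2_d2[OF g that] C2_d2[OF h that] by (intro derivative_intros)
  have c: "continuous_on {0..} (\<lambda>t. d2 f t + d2 g t - d2 h t)"
    using C2_cont2[OF f] C2_cont2[OF g] C2_cont2[OF h] by (intro continuous_intros)
  note r = C2_intro[of "\<lambda>t. f t + g t - h t" "\<lambda>t. d1 f t + d1 g t - d1 h t" "\<lambda>t. d2 f t + d2 g t - d2 h t", OF h1 h2 c]
  show "C2_nonneg (\<lambda>t. f t + g t - h t)" by (rule C2_intro(1)[OF h1 h2 c])
  show "\<And>t. t \<ge> 0 \<Longrightarrow> d1 (\<lambda>t. f t + g t - h t) t = d1 f t + d1 g t - d1 h t" by (rule C2_intro(2)[OF h1 h2 c])
  show "\<And>t. t \<ge> 0 \<Longrightarrow> d2 (\<lambda>t. f t + g t - h t) t = d2 f t + d2 g t - d2 h t" by (rule C2_intro(3)[OF h1 h2 c])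
qed




lemma cint: fixes g :: "real \<Rightarrow> real" assumes "continuous_on {0..} g" "0 \<le> (t::real)" shows "g integrable_on {0..t}"
  by (rule integrable_continuous_interval, rule continuous_on_subset[OF assms(1)]) auto

lemma ftc0:
  assumes "0 \<le> a" "a \<le> t" "\<And>s. s \<ge> 0 \<Longrightarrow> (F has_real_derivative F' s) (at s within {0..})"
  shows "(F' has_integral (F t - F a)) {a..t}"
proof (rule fundamental_theorem_of_calculus[OF assms(2)])
  fix x assume x: "x \<in> {a..t}"
  then have "(F has_real_derivative F' x) (at x within {0..})" using assms by auto
  then have "(F has_real_derivative F' x) (at x within {a..t})"
    by (rule DERIV_subset) (use assms in auto)
  then show "(F has_vector_derivative F' x) (at x within {a..t})"
    by (simp add: has_real_derivative_iff_has_vector_derivative)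
qed

definition Aval :: "real \<Rightarrow> (real \<Rightarrow> real) \<Rightarrow> (real \<Rightarrow> real) \<Rightarrow> real \<Rightarrow> real" where
  "Aval r g M t = 1 / t * integral {0..t}
      (\<lambda>s. r - 1/2 * (d1 g s)^2 - pi^2 / (8 * (M s)^2) + d1 M s / (2 * M s))"

lemma S_val_Aval: "S_val r g M = Liminf at_top (\<lambda>t. ereal (Aval r g M t))"
  unfolding S_val_def Aval_def ..

lemma A_decomp:
  assumes g: "C2_nonneg g" and M: "C2_nonneg M" and pos: "\<forall>t\<ge>0. M t > 0" and t: "t > 0"
  shows "t * Aval r g M t = integral {0..t} (\<lambda>s. r - 1/2 * (d1 g s)^2 - pi^2 / (8 * (M s)^2))
           + (ln (M t) - ln (M 0)) / 2"
    "(\<lambda>s. r - 1/2 * (d1 g s)^2 - pi^2 / (8 * (M s)^2)) integrable_on {0..t}"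
proof -
  have cM: "continuous_on {0..} M" by (rule C2_cont0[OF M])
  have cG: "continuous_on {0..} (\<lambda>s. r - 1/2 * (d1 g s)^2 - pi^2 / (8 * (M s)^2))"
    using cM C2_cont1[OF g] pos by (intro continuous_intros) auto
  show iG: "(\<lambda>s. r - 1/2 * (d1 g s)^2 - pi^2 / (8 * (M s)^2)) integrable_on {0..t}"
    using cint[OF cG] t by simp
  have dH: "((\<lambda>s. ln (M s) / 2) has_real_derivative d1 M s / (2 * M s)) (at s within {0..})" if "s \<ge> 0" for s
  proof -
    have Ms: "M s > 0" using pos that by auto
    have "((\<lambda>s. ln (M s)) has_real_derivative (inverse (M s) * d1 M s)) (at s within {0..})"
      using DERIV_chain'[OF C2_d1[OF M that] DERIV_ln[OF Ms]] .
    then have "((\<lambda>s. ln (M s) / 2) has_real_derivative (inverse (M s) * d1 M s) / 2) (at s within {0..})"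
      by (rule DERIV_cdivide)
    then show ?thesis by (simp add: field_simps)
  qed
  have hH: "((\<lambda>s. d1 M s / (2 * M s)) has_integral (ln (M t) / 2 - ln (M 0) / 2)) {0..t}"
    using ftc0[of 0 t "\<lambda>s. ln (M s) / 2", OF _ _ dH] t by simp
  have "((\<lambda>s. (r - 1/2 * (d1 g s)^2 - pi^2 / (8 * (M s)^2)) + d1 M s / (2 * M s)) has_integral
      (integral {0..t} (\<lambda>s. r - 1/2 * (d1 g s)^2 - pi^2 / (8 * (M s)^2)) + (ln (M t) / 2 - ln (M 0) / 2))) {0..t}"
    using iG hH by (intro has_integral_add) auto
  then have "integral {0..t} (\<lambda>s. r - 1/2 * (d1 g s)^2 - pi^2 / (8 * (M s)^2) + d1 M s / (2 * M s))
     = integral {0..t} (\<lambda>s. r - 1/2 * (d1 g s)^2 - pi^2 / (8 * (M s)^2)) + (ln (M t) / 2 - ln (M 0) / 2)"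
    by (rule integral_unique)
  then show "t * Aval r g M t = integral {0..t} (\<lambda>s. r - 1/2 * (d1 g s)^2 - pi^2 / (8 * (M s)^2))
           + (ln (M t) - ln (M 0)) / 2"
    unfolding Aval_def using t by (simp add: field_simps)
qed

lemma IBP_b2:
  assumes L: "C2_nonneg L" and t: "t \<ge> 0"
  shows "((\<lambda>s. (d1 L s)^2 + L s * d2 L s) has_integral (L t * d1 L t - L 0 * d1 L 0)) {0..t}"
proof -
  have "((\<lambda>s. L s * d1 L s) has_real_derivative (d1 L s)^2 + L s * d2 L s) (at s within {0..})" if "s \<ge> 0" for s
    using DERIV_mult[OF C2_d1[OF L that] C2_d2[OF L that]] by (simp add: power2_eq_square algebra_simps)
  from ftc0[of 0 t, OF _ t this] show ?thesis by simp
qed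





lemma ineq1: fixes x y e :: real assumes e: "e > 0"
  shows "1/2*x^2 - 1/2*(x+y)^2 \<ge> - (e/2)*x^2 - (1/(2*e) + 1/2)*y^2"
proof -
  have "0 \<le> (e*x - y)^2 / e" using e by simp
  also have "(e*x - y)^2 / e = e*x^2 - 2*(x*y) + y^2/e" using e by (simp add: field_simps power2_eq_square)
  finally have h: "0 \<le> e*x^2 - 2*(x*y) + y^2/e" .
  define v where "v = e*x^2"
  define w where "w = y^2/e"
  have h': "0 \<le> v - 2*(x*y) + w" using h unfolding v_def w_def .
  have a: "1/2*x^2 - 1/2*(x+y)^2 = -(x*y) - y^2/2" by (simp add: power2_sum algebra_simps)
  have b: "- (e/2)*x^2 - (1/(2*e) + 1/2)*y^2 = - v/2 - w/2 - y^2/2" unfolding v_def w_def using e by (simp add: field_simps)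
  show ?thesis unfolding a b using h' by linarith
qed

lemma comb:
  fixes IGo X lt l0 Y IGn ltt lt0 EA KB svt ert eX elt el0 eM Q1 Q2 M al0 eal0 alt0 :: real
  assumes "IGo = X - (lt - l0)/2" "Y = IGn + (ltt - lt0)/2" "IGo - EA - KB - svt \<le> IGn"
    "EA \<le> ert - eX + elt/2 - el0/2" "KB \<le> 4*Q1 + 2*Q2" "elt \<le> eM" "-eal0 \<le> el0" "-al0 \<le> l0"
    "-alt0 \<le> -lt0" "lt - M \<le> ltt"
  shows "X + eX - ert - svt - 4*Q1 - 2*Q2 - M/2 - eM/2 - al0/2 - eal0/2 - alt0/2 \<le> Y"
  using assms by argo

locale lsetup =
  fixes f L :: "real \<Rightarrow> real" and L0 :: real
  assumes C2f: "C2_nonneg f" and C2L: "C2_nonneg L" and pos: "\<And>t. t \<ge> 0 \<Longrightarrow> L t > 0" and L0: "L0 \<ge> 1"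
begin

definition "Lt = (\<lambda>t. phi L0 (L t))"
definition "ft = (\<lambda>t. f t + L t - Lt t)"

lemma Lt_facts: "C2_nonneg Lt"
    "\<And>t. t \<ge> 0 \<Longrightarrow> d1 Lt t = phi1 L0 (L t) * d1 L t"
    "\<And>t. t \<ge> 0 \<Longrightarrow> d2 Lt t = phi2 L0 (L t) * (d1 L t)^2 + phi1 L0 (L t) * d2 L t"
  unfolding Lt_def using C2_comp[OF C2L phi_deriv phi1_deriv phi2_cont] by auto

lemma ft_facts: "C2_nonneg ft"
    "\<And>t. t \<ge> 0 \<Longrightarrow> d1 ft t = d1 f t + d1 L t - d1 Lt t"
    "\<And>t. t \<ge> 0 \<Longrightarrow> d2 ft t = d2 f t + d2 L t - d2 Lt t"
  unfolding ft_def using C2_diff[OF C2f C2L Lt_facts(1)] by auto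

lemma Lt_pos: "t \<ge> 0 \<Longrightarrow> Lt t > 0"
proof -
  assume t: "t \<ge> 0"
  show "Lt t > 0"
  proof (cases "L t \<le> L0")
    case True then show ?thesis using pos[OF t] by (simp add: Lt_def phi_def)
  next
    case False then show ?thesis using phi_ge[of L0 "L t"] L0 by (simp add: Lt_def)
  qed
qed

lemma Lt_le: "Lt t \<le> L t" "Lt t \<le> L0 + 1"
  unfolding Lt_def by (rule phi_le, rule phi_le2)

lemma Lt_lnge: assumes "t \<ge> 0" shows "ln (Lt t) \<ge> ln (L t) - max 0 (ln (L t))"
proof (cases "L t \<le> L0")
  case True then show ?thesis by (simp add: Lt_def phi_def)
next
  case False
  then have "Lt t \<ge> 1" using phi_ge[of L0 "L t"] L0 by (simp add: Lt_def)
  then have "ln (Lt t) \<ge> 0" by simp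
  then show ?thesis by simp
qed

abbreviation "I1 g M t \<equiv> integral {0..t} (\<lambda>s. \<bar>d2 g s\<bar> * M s)"
abbreviation "I2 M t \<equiv> integral {0..t} (\<lambda>s. \<bar>d2 M s\<bar> * M s)"

lemma cont_L: "continuous_on {0..} L" by (rule C2_cont0[OF C2L])

lemma int_nonneg: assumes "C2_nonneg g" "C2_nonneg M" "\<And>t. t \<ge> 0 \<Longrightarrow> M t > 0" "t \<ge> 0"
  shows "(\<lambda>s. \<bar>d2 g s\<bar> * M s) integrable_on {0..t}" "integral {0..t} (\<lambda>s. \<bar>d2 g s\<bar> * M s) \<ge> 0"
proof -
  have c: "continuous_on {0..} (\<lambda>s. \<bar>d2 g s\<bar> * M s)"
    using C2_cont2[OF assms(1)] C2_cont0[OF assms(2)] by (intro continuous_intros)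
  show i: "(\<lambda>s. \<bar>d2 g s\<bar> * M s) integrable_on {0..t}" by (rule cint[OF c assms(4)])
  show "integral {0..t} (\<lambda>s. \<bar>d2 g s\<bar> * M s) \<ge> 0"
  proof (rule integral_nonneg[OF i])
    fix x assume "x \<in> {0..t}"
    then have "M x > 0" using assms(3) by auto
    then show "0 \<le> \<bar>d2 g x\<bar> * M x" by simp
  qed
qed

lemma E_parts: assumes t: "t \<ge> 0"
  shows "\<bar>d1 f t\<bar> * L t + I1 f L t \<ge> 0" "\<bar>d1 L t\<bar> * L t + I2 L t \<le> 2 * E_fun f L t"
    "E_fun f L t \<ge> 0"
proof -
  have a: "I1 f L t \<ge> 0" "I2 L t \<ge> 0" using int_nonneg[OF C2f C2L pos t] int_nonneg[OF C2L C2L pos t] by auto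
  have b: "\<bar>d1 f t\<bar> * L t \<ge> 0" "\<bar>d1 L t\<bar> * L t \<ge> 0" using pos[OF t] by auto
  show "\<bar>d1 f t\<bar> * L t + I1 f L t \<ge> 0" using a b by simp
  show "\<bar>d1 L t\<bar> * L t + I2 L t \<le> 2 * E_fun f L t" using a b unfolding E_fun_def by simp
  show "E_fun f L t \<ge> 0" using a b unfolding E_fun_def by simp
qed

lemma IB: assumes t: "t \<ge> 0"
  shows "(\<lambda>s. (d1 L s)^2) integrable_on {0..t}"
    "integral {0..t} (\<lambda>s. (d1 L s)^2) \<le> 2 * E_fun f L t + \<bar>L 0 * d1 L 0\<bar>"
proof -
  have c: "continuous_on {0..} (\<lambda>s. (d1 L s)^2)" using C2_cont1[OF C2L] by (intro continuous_intros)
  show i: "(\<lambda>s. (d1 L s)^2) integrable_on {0..t}" by (rule cint[OF c t])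
  have c2: "continuous_on {0..} (\<lambda>s. L s * d2 L s)" using C2_cont2[OF C2L] cont_L by (intro continuous_intros)
  have i2: "(\<lambda>s. L s * d2 L s) integrable_on {0..t}" by (rule cint[OF c2 t])
  have i3: "(\<lambda>s. \<bar>d2 L s\<bar> * L s) integrable_on {0..t}" using int_nonneg[OF C2L C2L pos t] by auto
  have eq: "integral {0..t} (\<lambda>s. (d1 L s)^2) + integral {0..t} (\<lambda>s. L s * d2 L s) = L t * d1 L t - L 0 * d1 L 0"
    using integral_add[OF i i2] integral_unique[OF IBP_b2[OF C2L t]] by simp
  have le: "- integral {0..t} (\<lambda>s. L s * d2 L s) \<le> I2 L t"
  proof -
    have pt: "- (L x * d2 L x) \<le> \<bar>d2 L x\<bar> * L x" if "x \<in> {0..t}" for x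
    proof -
      have "L x > 0" using pos that by auto
      moreover have "- (L x * d2 L x) \<le> \<bar>L x * d2 L x\<bar>" by (rule abs_ge_minus_self)
      ultimately show ?thesis by (simp add: abs_mult mult.commute)
    qed
    have "integral {0..t} (\<lambda>s. - (L s * d2 L s)) \<le> I2 L t"
      by (rule integral_le) (use i2 i3 pt in \<open>auto intro: integrable_neg\<close>)
    then show ?thesis by (simp add: integral_neg)
  qed
  have "L t * d1 L t \<le> \<bar>d1 L t\<bar> * L t" using pos[OF t] by (simp add: abs_mult mult.commute)
  moreover have "- (L 0 * d1 L 0) \<le> \<bar>L 0 * d1 L 0\<bar>" by simp
  ultimately show "integral {0..t} (\<lambda>s. (d1 L s)^2) \<le> 2 * E_fun f L t + \<bar>L 0 * d1 L 0\<bar>"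
    using eq le E_parts(2)[OF t] by linarith
qed


lemma pw_abs: assumes "s \<ge> 0"
  shows "\<bar>d1 ft s\<bar> \<le> \<bar>d1 f s\<bar> + 2 * \<bar>d1 L s\<bar>" "\<bar>d1 Lt s\<bar> \<le> \<bar>d1 L s\<bar>"
    "\<bar>d2 ft s\<bar> \<le> \<bar>d2 f s\<bar> + 2 * \<bar>d2 L s\<bar> + 8 * (d1 L s)^2"
    "\<bar>d2 Lt s\<bar> \<le> 8 * (d1 L s)^2 + \<bar>d2 L s\<bar>"
proof -
  define p where "p = phi1 L0 (L s)"
  define q where "q = phi2 L0 (L s)"
  have p: "\<bar>p\<bar> \<le> 1" unfolding p_def by (rule phi1_bound)
  have q: "\<bar>q\<bar> \<le> 8" unfolding q_def by (rule phi2_bound)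
  have p1: "\<bar>1 - p\<bar> \<le> 2" using p by (simp add: abs_le_iff)
  have e1: "d1 ft s = d1 f s + (1 - p) * d1 L s" using ft_facts(2)[OF assms] Lt_facts(2)[OF assms]
    by (simp add: p_def algebra_simps)
  have e2: "d1 Lt s = p * d1 L s" using Lt_facts(2)[OF assms] by (simp add: p_def)
  have e3: "d2 ft s = d2 f s + (1 - p) * d2 L s - q * (d1 L s)^2" using ft_facts(3)[OF assms] Lt_facts(3)[OF assms]
    by (simp add: p_def q_def algebra_simps)
  have e4: "d2 Lt s = q * (d1 L s)^2 + p * d2 L s" using Lt_facts(3)[OF assms] by (simp add: p_def q_def)
  have m1: "\<bar>(1 - p) * d1 L s\<bar> \<le> 2 * \<bar>d1 L s\<bar>" unfolding abs_mult by (rule mult_right_mono[OF p1]) simp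
  have m2: "\<bar>p * d1 L s\<bar> \<le> 1 * \<bar>d1 L s\<bar>" unfolding abs_mult by (rule mult_right_mono[OF p]) simp
  have m3: "\<bar>(1 - p) * d2 L s\<bar> \<le> 2 * \<bar>d2 L s\<bar>" unfolding abs_mult by (rule mult_right_mono[OF p1]) simp
  have m4: "\<bar>q * (d1 L s)^2\<bar> \<le> 8 * (d1 L s)^2" unfolding abs_mult using mult_right_mono[OF q, of "(d1 L s)^2"] by simp
  have m5: "\<bar>p * d2 L s\<bar> \<le> 1 * \<bar>d2 L s\<bar>" unfolding abs_mult by (rule mult_right_mono[OF p]) simp
  show "\<bar>d1 ft s\<bar> \<le> \<bar>d1 f s\<bar> + 2 * \<bar>d1 L s\<bar>" unfolding e1 using m1 abs_triangle_ineq[of "d1 f s" "(1 - p) * d1 L s"] by linarith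
  show "\<bar>d1 Lt s\<bar> \<le> \<bar>d1 L s\<bar>" unfolding e2 using m2 by simp
  show "\<bar>d2 ft s\<bar> \<le> \<bar>d2 f s\<bar> + 2 * \<bar>d2 L s\<bar> + 8 * (d1 L s)^2" unfolding e3
    using m3 m4 abs_triangle_ineq[of "d2 f s" "(1 - p) * d2 L s"] abs_triangle_ineq4[of "d2 f s + (1 - p) * d2 L s" "q * (d1 L s)^2"] by linarith
  show "\<bar>d2 Lt s\<bar> \<le> 8 * (d1 L s)^2 + \<bar>d2 L s\<bar>" unfolding e4
    using m4 m5 abs_triangle_ineq[of "q * (d1 L s)^2" "p * d2 L s"] by linarith
qed

lemma pw: assumes "s \<ge> 0"
  shows "\<bar>d1 ft s\<bar> * Lt s \<le> \<bar>d1 f s\<bar> * L s + 2 * (\<bar>d1 L s\<bar> * L s)"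
    "\<bar>d1 Lt s\<bar> * Lt s \<le> \<bar>d1 L s\<bar> * L s"
    "\<bar>d2 ft s\<bar> * Lt s \<le> \<bar>d2 f s\<bar> * L s + 2 * (\<bar>d2 L s\<bar> * L s) + 8 * (L0 + 1) * (d1 L s)^2"
    "\<bar>d2 Lt s\<bar> * Lt s \<le> 8 * (L0 + 1) * (d1 L s)^2 + \<bar>d2 L s\<bar> * L s"
proof -
  have lt: "0 \<le> Lt s" "Lt s \<le> L s" "Lt s \<le> L0 + 1" using Lt_pos[OF assms] Lt_le by auto
  note a = pw_abs[OF assms]
  have k1: "\<bar>d1 f s\<bar> * Lt s \<le> \<bar>d1 f s\<bar> * L s" "\<bar>d1 L s\<bar> * Lt s \<le> \<bar>d1 L s\<bar> * L s"
    "\<bar>d2 f s\<bar> * Lt s \<le> \<bar>d2 f s\<bar> * L s" "\<bar>d2 L s\<bar> * Lt s \<le> \<bar>d2 L s\<bar> * L s"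
    "(d1 L s)^2 * Lt s \<le> (d1 L s)^2 * (L0 + 1)"
    using lt by (auto intro!: mult_left_mono)
  have "\<bar>d1 ft s\<bar> * Lt s \<le> (\<bar>d1 f s\<bar> + 2 * \<bar>d1 L s\<bar>) * Lt s" by (rule mult_right_mono[OF a(1) lt(1)])
  then show "\<bar>d1 ft s\<bar> * Lt s \<le> \<bar>d1 f s\<bar> * L s + 2 * (\<bar>d1 L s\<bar> * L s)" using k1 by (simp add: algebra_simps)
  have "\<bar>d1 Lt s\<bar> * Lt s \<le> \<bar>d1 L s\<bar> * Lt s" by (rule mult_right_mono[OF a(2) lt(1)])
  then show "\<bar>d1 Lt s\<bar> * Lt s \<le> \<bar>d1 L s\<bar> * L s" using k1 by simp
  have "\<bar>d2 ft s\<bar> * Lt s \<le> (\<bar>d2 f s\<bar> + 2 * \<bar>d2 L s\<bar> + 8 * (d1 L s)^2) * Lt s" by (rule mult_right_mono[OF a(3) lt(1)])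
  then show "\<bar>d2 ft s\<bar> * Lt s \<le> \<bar>d2 f s\<bar> * L s + 2 * (\<bar>d2 L s\<bar> * L s) + 8 * (L0 + 1) * (d1 L s)^2"
    using k1 by (simp add: algebra_simps)
  have "\<bar>d2 Lt s\<bar> * Lt s \<le> (8 * (d1 L s)^2 + \<bar>d2 L s\<bar>) * Lt s" by (rule mult_right_mono[OF a(4) lt(1)])
  then show "\<bar>d2 Lt s\<bar> * Lt s \<le> 8 * (L0 + 1) * (d1 L s)^2 + \<bar>d2 L s\<bar> * L s"
    using k1 by (simp add: algebra_simps)
qed



lemma Enew: assumes t: "t \<ge> 0"
  shows "E_fun ft Lt t \<le> 5 * E_fun f L t + 12 * (L0 + 1) * (2 * E_fun f L t + \<bar>L 0 * d1 L 0\<bar>)"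
    "E_fun ft Lt t \<ge> 0"
proof -
  define K where "K = L0 + 1"
  define IB where "IB = integral {0..t} (\<lambda>s. (d1 L s)^2)"
  have iF: "(\<lambda>s. \<bar>d2 f s\<bar> * L s) integrable_on {0..t}" "I1 f L t \<ge> 0" using int_nonneg[OF C2f C2L pos t] by auto
  have iL: "(\<lambda>s. \<bar>d2 L s\<bar> * L s) integrable_on {0..t}" "I2 L t \<ge> 0" using int_nonneg[OF C2L C2L pos t] by auto
  have iFt: "(\<lambda>s. \<bar>d2 ft s\<bar> * Lt s) integrable_on {0..t}" "I1 ft Lt t \<ge> 0"
    using int_nonneg[OF ft_facts(1) Lt_facts(1) Lt_pos t] by auto
  have iLt: "(\<lambda>s. \<bar>d2 Lt s\<bar> * Lt s) integrable_on {0..t}" "I2 Lt t \<ge> 0"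
    using int_nonneg[OF Lt_facts(1) Lt_facts(1) Lt_pos t] by auto
  note ib = IB[OF t]
  have hF: "((\<lambda>s. \<bar>d2 f s\<bar> * L s) has_integral I1 f L t) {0..t}" using iF by auto
  have hL: "((\<lambda>s. \<bar>d2 L s\<bar> * L s) has_integral I2 L t) {0..t}" using iL by auto
  have hB: "((\<lambda>s. (d1 L s)^2) has_integral IB) {0..t}" using ib(1) unfolding IB_def by auto
  have hB8: "((\<lambda>s. 8 * K * (d1 L s)^2) has_integral (8 * K * IB)) {0..t}"
    by (rule has_integral_cmult_real) (rule hB)
  have hL2: "((\<lambda>s. 2 * (\<bar>d2 L s\<bar> * L s)) has_integral (2 * I2 L t)) {0..t}"
    by (rule has_integral_cmult_real) (rule hL)
  have r1: "((\<lambda>s. \<bar>d2 f s\<bar> * L s + 2 * (\<bar>d2 L s\<bar> * L s) + 8 * K * (d1 L s)^2) has_integral (I1 f L t + 2 * I2 L t + 8 * K * IB)) {0..t}"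
    by (intro has_integral_add hF hL2 hB8)
  have r2: "((\<lambda>s. 8 * K * (d1 L s)^2 + \<bar>d2 L s\<bar> * L s) has_integral (8 * K * IB + I2 L t)) {0..t}"
    by (intro has_integral_add hL hB8)
  have j1: "I1 ft Lt t \<le> I1 f L t + 2 * I2 L t + 8 * K * IB"
    by (rule has_integral_le[OF _ r1]) (use iFt pw(3) in \<open>auto simp: K_def\<close>)
  have j2: "I2 Lt t \<le> 8 * K * IB + I2 L t"
    by (rule has_integral_le[OF _ r2]) (use iLt pw(4) in \<open>auto simp: K_def\<close>)
  have ibb: "IB \<le> 2 * E_fun f L t + \<bar>L 0 * d1 L 0\<bar>" using ib(2) unfolding IB_def .
  have K: "K \<ge> 0" using L0 by (simp add: K_def)
  have kb: "K * IB \<le> K * (2 * E_fun f L t + \<bar>L 0 * d1 L 0\<bar>)" by (rule mult_left_mono[OF ibb K])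
  note w = pw(1)[OF t] pw(2)[OF t]
  have ep: "\<bar>d1 f t\<bar> * L t + I1 f L t \<ge> 0" "\<bar>d1 L t\<bar> * L t + I2 L t \<le> 2 * E_fun f L t"
    using E_parts[OF t] by auto
  have E: "E_fun f L t = \<bar>d1 f t\<bar> * L t + I1 f L t + 1/2 * (\<bar>d1 L t\<bar> * L t) + 1/2 * I2 L t"
    unfolding E_fun_def by simp
  have En: "E_fun ft Lt t = \<bar>d1 ft t\<bar> * Lt t + I1 ft Lt t + 1/2 * (\<bar>d1 Lt t\<bar> * Lt t) + 1/2 * I2 Lt t"
    unfolding E_fun_def by simp
  have j1': "I1 ft Lt t \<le> I1 f L t + 2 * I2 L t + 8 * (K * IB)" using j1 by (simp add: mult.assoc)
  have j2': "I2 Lt t \<le> 8 * (K * IB) + I2 L t" using j2 by (simp add: mult.assoc)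
  have nn: "0 \<le> \<bar>d1 f t\<bar> * L t" using pos[OF t] by simp
  have "E_fun ft Lt t \<le> 5 * E_fun f L t + 12 * (K * IB)"
    unfolding En using w j1' j2' E iL(2) iF(2) nn by linarith
  then show "E_fun ft Lt t \<le> 5 * E_fun f L t + 12 * (L0 + 1) * (2 * E_fun f L t + \<bar>L 0 * d1 L 0\<bar>)"
    using kb unfolding K_def by (simp add: algebra_simps)
  have "\<bar>d1 ft t\<bar> * Lt t \<ge> 0" "\<bar>d1 Lt t\<bar> * Lt t \<ge> 0" using Lt_pos[OF t] by auto
  then show "E_fun ft Lt t \<ge> 0" unfolding En using iFt(2) iLt(2) by simp
qed

lemma condIII_new: assumes "cond_III f L" shows "cond_III ft Lt"
proof -
  define k0 where "k0 = \<bar>L 0 * d1 L 0\<bar>"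
  have E0: "((\<lambda>t. E_fun f L t / t) \<longlongrightarrow> 0) at_top" using assms unfolding cond_III_def .
  have c0: "((\<lambda>t. k0 / t) \<longlongrightarrow> 0) at_top"
    by (rule tendsto_divide_0[OF tendsto_const]) (rule filterlim_at_top_imp_at_infinity[OF filterlim_ident])
  have up: "((\<lambda>t. (5 + 24 * (L0 + 1)) * (E_fun f L t / t) + 12 * (L0 + 1) * (k0 / t)) \<longlongrightarrow> 0) at_top"
    using tendsto_add[OF tendsto_mult_right_zero[OF E0] tendsto_mult_right_zero[OF c0]] by simp
  show ?thesis unfolding cond_III_def
  proof (rule tendsto_sandwich[OF _ _ tendsto_const up])
    show "\<forall>\<^sub>F t in at_top. 0 \<le> E_fun ft Lt t / t"
      using eventually_gt_at_top[of 0] by eventually_elim (use Enew(2) in auto)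
    show "\<forall>\<^sub>F t in at_top. E_fun ft Lt t / t \<le> (5 + 24 * (L0 + 1)) * (E_fun f L t / t) + 12 * (L0 + 1) * (k0 / t)"
      using eventually_gt_at_top[of 0]
    proof eventually_elim
      case (elim t)
      have "E_fun ft Lt t \<le> (5 + 24 * (L0 + 1)) * E_fun f L t + 12 * (L0 + 1) * k0"
        using Enew(1)[of t] elim unfolding k0_def by (simp add: algebra_simps)
      then have "E_fun ft Lt t / t \<le> ((5 + 24 * (L0 + 1)) * E_fun f L t + 12 * (L0 + 1) * k0) / t"
        by (rule divide_right_mono) (use elim in auto)
      then show ?case by (simp add: add_divide_distrib)
    qed
  qed
qed



lemma growth: assumes "cond_III f L" shows "((\<lambda>t. max 0 (ln (L t)) / t) \<longlongrightarrow> 0) at_top"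
proof -
  have E0: "((\<lambda>t. E_fun f L t / t) \<longlongrightarrow> 0) at_top" using assms unfolding cond_III_def .
  have ev: "eventually (\<lambda>t. E_fun f L t / t < 1/2) at_top" by (rule order_tendstoD(2)[OF E0]) simp
  have "eventually (\<lambda>t. E_fun f L t / t < 1/2 \<and> t \<ge> 1) at_top"
    using ev eventually_ge_at_top[of 1] by eventually_elim auto
  then obtain T where T: "\<And>t. t \<ge> T \<Longrightarrow> E_fun f L t / t < 1/2 \<and> t \<ge> 1" unfolding eventually_at_top_linorder by blast
  have T1: "T \<ge> 1" using T[of T] by auto
  have bL: "\<bar>d1 L t\<bar> * L t \<le> t" if "t \<ge> T" for t
  proof -
    have t1: "t \<ge> 1" using T[OF that] by auto
    have "E_fun f L t < t / 2" using T[OF that] t1 by (simp add: field_simps)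
    moreover have "\<bar>d1 L t\<bar> * L t \<le> 2 * E_fun f L t"
      using E_parts(2)[of t] int_nonneg(2)[OF C2L C2L pos, of t] t1 by simp
    ultimately show ?thesis by simp
  qed
  define c where "c = L T * L T"
  have c0: "c \<ge> 0" unfolding c_def by simp
  have Lsq: "L t * L t \<le> c + t * t" if "t \<ge> T" for t
  proof -
    have d1: "((\<lambda>s. L s * L s) has_real_derivative 2 * (L s * d1 L s)) (at s within {0..})" if "s \<ge> 0" for s
      using DERIV_mult[OF C2_d1[OF C2L that] C2_d1[OF C2L that]] by (simp add: algebra_simps)
    have h1: "((\<lambda>s. 2 * (L s * d1 L s)) has_integral (L t * L t - L T * L T)) {T..t}"
      by (rule ftc0[OF _ that d1]) (use T1 in auto)
    have d2: "((\<lambda>s. s * s) has_real_derivative 2 * s) (at s within {0..})" for s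
      by (auto intro!: derivative_eq_intros)
    have h2: "((\<lambda>s. 2 * s) has_integral (t * t - T * T)) {T..t}"
      by (rule ftc0[OF _ that d2]) (use T1 in auto)
    have "L t * L t - L T * L T \<le> t * t - T * T"
    proof (rule has_integral_le[OF h1 h2])
      fix s assume s: "s \<in> {T..t}"
      have "L s * d1 L s \<le> \<bar>d1 L s\<bar> * L s" using pos[of s] s T1 by (simp add: abs_mult mult.commute)
      also have "\<dots> \<le> s" using bL s by auto
      finally show "2 * (L s * d1 L s) \<le> 2 * s" by simp
    qed
    moreover have "T * T \<ge> 0" by simp
    ultimately show ?thesis unfolding c_def by linarith
  qed
  have lim: "((\<lambda>t. ln (1 + c + t * t) / 2 / t) \<longlongrightarrow> 0) at_top" using c0 by real_asymp
  show ?thesis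
  proof (rule tendsto_sandwich[OF _ _ tendsto_const lim])
    show "\<forall>\<^sub>F t in at_top. 0 \<le> max 0 (ln (L t)) / t"
      using eventually_gt_at_top[of 0] by eventually_elim auto
    show "\<forall>\<^sub>F t in at_top. max 0 (ln (L t)) / t \<le> ln (1 + c + t * t) / 2 / t"
      using eventually_ge_at_top[of T]
    proof eventually_elim
      case (elim t)
      have t0: "t > 0" using elim T1 by simp
      have Lp: "L t > 0" using pos[of t] t0 by simp
      have "ln (L t * L t) \<le> ln (1 + c + t * t)"
        by (rule ln_mono) (use Lsq[OF elim] Lp in auto)
      then have "ln (L t) \<le> ln (1 + c + t * t) / 2" using Lp by (simp add: ln_mult)
      moreover have "0 \<le> ln (1 + c + t * t)" using c0 by simp
      ultimately have "max 0 (ln (L t)) \<le> ln (1 + c + t * t) / 2" by simp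
      then have "max 0 (ln (L t)) / t \<le> (ln (1 + c + t * t) / 2) / t"
        by (rule divide_right_mono) (use t0 in auto)
      then show ?case .
    qed
  qed
qed



lemma Sineq:
  fixes r sv e t :: real
  assumes t: "t > 0" and e: "e > 0" and sv: "pi^2 / (8 * L0^2) \<le> sv/2"
  shows "t * Aval r ft Lt t \<ge> t * ((1+e) * Aval r f L t - e*r - sv/2)
     - (4*(1+1/e) * E_fun f L t + (1+e)/2 * max 0 (ln (L t))
        + (2*(1+1/e)*\<bar>L 0 * d1 L 0\<bar> + (1+e)/2*\<bar>ln (L 0)\<bar> + \<bar>ln (Lt 0)\<bar>/2))"
proof -
  have t0: "t \<ge> 0" using t by simp
  have posA: "\<forall>t\<ge>0. L t > 0" using pos by auto
  have posB: "\<forall>t\<ge>0. Lt t > 0" using Lt_pos by auto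
  define Go where "Go = (\<lambda>s. r - 1/2 * (d1 f s)^2 - pi^2 / (8 * (L s)^2))"
  define Gn where "Gn = (\<lambda>s. r - 1/2 * (d1 ft s)^2 - pi^2 / (8 * (Lt s)^2))"
  define IGo where "IGo = integral {0..t} Go"
  define IGn where "IGn = integral {0..t} Gn"
  define IA where "IA = integral {0..t} (\<lambda>s. (d1 f s)^2)"
  define IB where "IB = integral {0..t} (\<lambda>s. (d1 L s)^2)"
  define \<kappa> where "\<kappa> = 2 * (1 + 1/e)"
  note dO = A_decomp[OF C2f C2L posA t, of r, folded Go_def, folded IGo_def]
  note dN = A_decomp[OF ft_facts(1) Lt_facts(1) posB t, of r, folded Gn_def, folded IGn_def]
  have hGo: "(Go has_integral IGo) {0..t}" using dO(2) unfolding IGo_def by auto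
  have hGn: "(Gn has_integral IGn) {0..t}" using dN(2) unfolding IGn_def by auto
  have cA: "continuous_on {0..} (\<lambda>s. (d1 f s)^2)" using C2_cont1[OF C2f] by (intro continuous_intros)
  have hA: "((\<lambda>s. (d1 f s)^2) has_integral IA) {0..t}" using cint[OF cA t0] unfolding IA_def by auto
  have hB: "((\<lambda>s. (d1 L s)^2) has_integral IB) {0..t}" using IB(1)[OF t0] unfolding IB_def by auto
  have hC: "((\<lambda>s. c) has_integral (c * t)) {0..t}" for c
    using has_integral_const_real[of c 0 t] t0 by (simp add: mult.commute)
  have hR: "((\<lambda>s. r - 1/2 * (d1 f s)^2) has_integral (r * t - 1/2 * IA)) {0..t}"
    by (intro has_integral_diff hC has_integral_cmult_real hA)
  have iii: "IGo \<le> r * t - 1/2 * IA"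
    by (rule has_integral_le[OF hGo hR]) (simp add: Go_def)
  have hLow: "((\<lambda>s. Go s - e/2 * (d1 f s)^2 - \<kappa> * (d1 L s)^2 - sv/2) has_integral (IGo - e/2 * IA - \<kappa> * IB - sv/2 * t)) {0..t}"
    by (intro has_integral_diff hGo hC has_integral_cmult_real hA hB)
  have iv: "IGo - e/2 * IA - \<kappa> * IB - sv/2 * t \<le> IGn"
  proof (rule has_integral_le[OF hLow hGn])
    fix s assume s: "s \<in> {0..t}"
    then have s0: "s \<ge> 0" by simp
    define p where "p = phi1 L0 (L s)"
    define y where "y = (1 - p) * d1 L s"
    have ft1: "d1 ft s = d1 f s + y" using ft_facts(2)[OF s0] Lt_facts(2)[OF s0]
      by (simp add: y_def p_def algebra_simps)
    have p1: "\<bar>1 - p\<bar> \<le> 2" using phi1_bound[of L0 "L s"] unfolding p_def by (simp add: abs_le_iff)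
    have "(1 - p)^2 \<le> 2^2" using p1 by (metis abs_le_square_iff abs_numeral)
    then have y2: "y^2 \<le> 4 * (d1 L s)^2" unfolding y_def power_mult_distrib
      by (intro mult_right_mono) auto
    have q: "(1/(2*e) + 1/2) * y^2 \<le> (1/(2*e) + 1/2) * (4 * (d1 L s)^2)"
      by (rule mult_left_mono[OF y2]) (use e in simp)
    have q': "(1/(2*e) + 1/2) * (4 * (d1 L s)^2) = \<kappa> * (d1 L s)^2" unfolding \<kappa>_def using e by (simp add: field_simps)
    have i1: "1/2*(d1 f s)^2 - 1/2*(d1 f s + y)^2 \<ge> - (e/2)*(d1 f s)^2 - (1/(2*e) + 1/2)*y^2"
      by (rule ineq1[OF e])
    have Ls: "L s > 0" using pos[OF s0] .
    have pi: "pi^2 / (8 * (Lt s)^2) \<le> sv/2 + pi^2 / (8 * (L s)^2)"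
    proof (cases "L s \<le> L0")
      case True
      then have "Lt s = L s" by (simp add: Lt_def phi_def)
      moreover have "sv/2 \<ge> 0" using sv by (smt (verit) zero_le_divide_iff zero_le_power2 mult_nonneg_nonneg)
      ultimately show ?thesis by simp
    next
      case False
      then have "Lt s \<ge> L0" using phi_ge[of L0 "L s"] by (simp add: Lt_def)
      then have "(Lt s)^2 \<ge> L0^2" using L0 by (intro power_mono) auto
      moreover have "Lt s > 0" by (rule Lt_pos[OF s0])
      ultimately have "pi^2 / (8 * (Lt s)^2) \<le> pi^2 / (8 * L0^2)" using L0
        by (intro divide_left_mono) auto
      moreover have "pi^2 / (8 * (L s)^2) \<ge> 0" by simp
      ultimately show ?thesis using sv by linarith
    qed
    show "Go s - e/2 * (d1 f s)^2 - \<kappa> * (d1 L s)^2 - sv/2 \<le> Gn s"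
      unfolding Go_def Gn_def ft1 using i1 q q' pi by linarith
  qed
  have v: "IB \<le> 2 * E_fun f L t + \<bar>L 0 * d1 L 0\<bar>" using IB(2)[OF t0] unfolding IB_def .
  have vi: "ln (Lt t) \<ge> ln (L t) - max 0 (ln (L t))" by (rule Lt_lnge[OF t0])
  define M where "M = max 0 (ln (L t))"
  define X where "X = t * Aval r f L t"
  define Y where "Y = t * Aval r ft Lt t"
  define E where "E = E_fun f L t"
  define k0 where "k0 = \<bar>L 0 * d1 L 0\<bar>"
  have E0: "E \<ge> 0" unfolding E_def by (rule E_parts(3)[OF t0])
  have dO': "IGo = X - (ln (L t) - ln (L 0)) / 2" using dO(1) unfolding X_def by simp
  have dN': "Y = IGn + (ln (Lt t) - ln (Lt 0)) / 2" using dN(1) unfolding Y_def by simp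
  have P1: "e * (1/2 * IA) \<le> e * (r * t - IGo)" using iii e by (intro mult_left_mono) auto
  have P1': "e/2 * IA \<le> e * (r * t) - e * X + e * ln (L t) / 2 - e * ln (L 0) / 2"
    using P1 unfolding dO' by (simp add: algebra_simps diff_divide_distrib add_divide_distrib)
  have kpos: "\<kappa> \<ge> 0" unfolding \<kappa>_def using e by simp
  have P2: "\<kappa> * IB \<le> \<kappa> * (2 * E + k0)" using v kpos unfolding E_def k0_def by (intro mult_left_mono) auto
  have P2': "\<kappa> * IB \<le> 4 * ((1 + 1/e) * E) + 2 * ((1 + 1/e) * k0)" using P2 unfolding \<kappa>_def by (simp add: algebra_simps)
  have M: "ln (L t) \<le> M" unfolding M_def by simp
  have P3: "e * ln (L t) \<le> e * M" using M e by (intro mult_left_mono) auto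
  have P4: "- (e * \<bar>ln (L 0)\<bar>) \<le> e * ln (L 0)"
  proof -
    have "\<bar>e * ln (L 0)\<bar> = e * \<bar>ln (L 0)\<bar>" using e by (simp add: abs_mult)
    moreover have "- \<bar>e * ln (L 0)\<bar> \<le> e * ln (L 0)" by simp
    ultimately show ?thesis by linarith
  qed
  have P5: "- \<bar>ln (L 0)\<bar> \<le> ln (L 0)" "- \<bar>ln (Lt 0)\<bar> \<le> - ln (Lt 0)" by auto
  have Y1: "Y \<ge> X + e * X - e * (r * t) - sv/2 * t - 4 * ((1 + 1/e) * E) - 2 * ((1 + 1/e) * k0)
       - M/2 - (e * M)/2 - \<bar>ln (L 0)\<bar>/2 - (e * \<bar>ln (L 0)\<bar>)/2 - \<bar>ln (Lt 0)\<bar>/2"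
    using comb[OF dO' dN' iv P1' P2' P3 P4 P5 vi[unfolded M_def[symmetric]]] by simp
  have eq1: "t * ((1+e) * Aval r f L t - e*r - sv/2) = X + e * X - e * (r * t) - sv/2 * t"
    unfolding X_def by (simp add: algebra_simps)
  have eq2: "4*(1+1/e) * E_fun f L t + (1+e)/2 * max 0 (ln (L t))
        + (2*(1+1/e)*\<bar>L 0 * d1 L 0\<bar> + (1+e)/2*\<bar>ln (L 0)\<bar> + \<bar>ln (Lt 0)\<bar>/2)
      = 4 * ((1 + 1/e) * E) + 2 * ((1 + 1/e) * k0) + M/2 + (e * M)/2 + \<bar>ln (L 0)\<bar>/2 + (e * \<bar>ln (L 0)\<bar>)/2 + \<bar>ln (Lt 0)\<bar>/2"
    unfolding E_def k0_def M_def by (simp add: algebra_simps add_divide_distrib)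
  show ?thesis unfolding eq1 eq2 Y_def[symmetric] using Y1 by linarith
qed

lemma Supper: assumes t: "t > 0"
  shows "t * Aval r ft Lt t \<le> r * t + (ln (L0 + 1) - ln (Lt 0)) / 2"
proof -
  have t0: "t \<ge> 0" using t by simp
  have posB: "\<forall>t\<ge>0. Lt t > 0" using Lt_pos by auto
  define Gn where "Gn = (\<lambda>s. r - 1/2 * (d1 ft s)^2 - pi^2 / (8 * (Lt s)^2))"
  note dN = A_decomp[OF ft_facts(1) Lt_facts(1) posB t, of r, folded Gn_def]
  have hGn: "(Gn has_integral integral {0..t} Gn) {0..t}" using dN(2) by auto
  have hC: "((\<lambda>s. r) has_integral (r * t)) {0..t}"
    using has_integral_const_real[of r 0 t] t0 by (simp add: mult.commute)
  have "integral {0..t} Gn \<le> r * t"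
  proof (rule has_integral_le[OF hGn hC])
    fix x
    have "0 \<le> pi^2/(8*(Lt x)^2)" "0 \<le> (d1 ft x)^2" by simp_all
    then show "Gn x \<le> r" unfolding Gn_def by linarith
  qed
  moreover have "ln (Lt t) \<le> ln (L0 + 1)" using Lt_le(2)[of t] Lt_pos[OF t0] by simp
  then have "(ln (Lt t) - ln (Lt 0))/2 \<le> (ln (L0+1) - ln (Lt 0))/2" by (intro divide_right_mono) auto
  ultimately show ?thesis using dN(1) by linarith
qed

end



lemma div_aux: fixes t X Z B :: real assumes "t > 0" "t * X \<ge> t * Z - B" shows "X \<ge> Z - B / t"
proof -
  have "X - (Z - B / t) = (t * X - (t * Z - B)) / t" using assms(1) by (simp add: field_simps)
  also have "\<dots> \<ge> 0" using assms by simp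
  finally show ?thesis by simp
qed

theorem lemma7:
  fixes r :: real and f L :: "real \<Rightarrow> real" and L0 :: real
    and Lt ft :: "real \<Rightarrow> real"
  assumes "r > 0"
    and "usual_conditions r f L"
    and "S_val r f L > 0"
    and "L0 = max (pi / (2 * sqrt (real_of_ereal (S_val r f L)))) 1"
    and "\<And>t. Lt t = (if L t \<le> L0 then L t else L0 + (L t - L0) * exp (- ((L t - L0)^2)))"
    and "\<And>t. ft t = f t + L t - Lt t"
  shows "(\<forall>t\<ge>0. Lt t > 0) \<and> cond_II ft Lt \<and> cond_III ft Lt \<and> cond_IV r ft Lt
         \<and> S_val r ft Lt \<ge> S_val r f L / 2 \<and> S_val r ft Lt > 0"
proof -
  have r: "r > 0" by (rule assms(1))
  have pos: "\<And>t. t \<ge> 0 \<Longrightarrow> L t > 0" and C2f: "C2_nonneg f" and C2L: "C2_nonneg L"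
    and III: "cond_III f L" and IV: "cond_IV r f L"
    using assms(2) unfolding usual_conditions_def cond_II_def by auto
  obtain s where Sd: "S_val r f L = ereal s"
    using IV unfolding cond_IV_def by (cases "S_val r f L") auto
  have s: "s > 0" using assms(3) Sd by simp
  have L0d: "L0 = max (pi / (2 * sqrt s)) 1" using assms(4) Sd by simp
  have L0: "L0 \<ge> 1" using L0d by simp
  have sv: "pi^2 / (8 * L0^2) \<le> s/2"
  proof -
    have sq: "sqrt s > 0" using s by simp
    have "pi / (2 * sqrt s) \<le> L0" using L0d by simp
    then have "pi \<le> 2 * sqrt s * L0" using sq by (simp add: divide_le_eq mult.commute)
    then have "pi^2 \<le> (2 * sqrt s * L0)^2" by (intro power_mono) auto
    also have "\<dots> = 4 * s * L0^2" using s by (simp add: power_mult_distrib)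
    finally have "pi^2 \<le> 4 * s * L0^2" .
    then show ?thesis using L0 by (simp add: field_simps)
  qed
  have loc: "lsetup f L L0" by unfold_locales (use C2f C2L pos L0 in auto)
  have LtE: "Lt = lsetup.Lt L L0"
    unfolding lsetup.Lt_def[OF loc] phi_def using assms(5) by (intro ext) simp
  have ftE: "ft = lsetup.ft f L L0"
    unfolding lsetup.ft_def[OF loc] LtE[symmetric] using assms(6) by (intro ext) simp
  define An where "An = Aval r ft Lt"
  define Ao where "Ao = Aval r f L"
  have Sn: "S_val r ft Lt = Liminf at_top (\<lambda>t. ereal (An t))" unfolding An_def by (rule S_val_Aval)
  have So: "Liminf at_top (\<lambda>t. ereal (Ao t)) = ereal s" unfolding Ao_def using Sd S_val_Aval by metis
  have low: "ereal (s/2) \<le> S_val r ft Lt"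
    unfolding Sn le_Liminf_iff
  proof (intro allI impI)
    fix y assume y: "y < ereal (s/2)"
    obtain y1 where y1: "y \<le> ereal y1" "0 \<le> y1" "y1 < s/2"
    proof (cases y)
      case (real y')
      then show ?thesis using that[of "max y' 0"] y s by auto
    next
      case PInf then show ?thesis using y by simp
    next
      case MInf then show ?thesis using that[of 0] s by simp
    qed
    define \<delta> where "\<delta> = s/2 - y1"
    have \<delta>: "\<delta> > 0" "\<delta> \<le> s/2" using y1 unfolding \<delta>_def by auto
    define e where "e = \<delta> / (4 * (r + 1))"
    have e: "e > 0" unfolding e_def using \<delta> r by simp
    have er: "e * r \<le> \<delta>/4"
    proof -
      have "e * r \<le> e * (r + 1)" using e by simp
      also have "\<dots> = \<delta>/4" unfolding e_def using r by (simp add: field_simps)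
      finally show ?thesis .
    qed
    have ev1: "eventually (\<lambda>t. ereal (s - \<delta>/4) < ereal (Ao t)) at_top"
    proof -
      have "ereal s \<le> Liminf at_top (\<lambda>t. ereal (Ao t))" using So by simp
      then have "\<forall>y<ereal s. eventually (\<lambda>t. y < ereal (Ao t)) at_top" unfolding le_Liminf_iff .
      moreover have "ereal (s - \<delta>/4) < ereal s" using \<delta> by simp
      ultimately show ?thesis by blast
    qed
    define C where "C = 2*(1+1/e)*\<bar>L 0 * d1 L 0\<bar> + (1+e)/2*\<bar>ln (L 0)\<bar> + \<bar>ln (lsetup.Lt L L0 0)\<bar>/2"
    define B where "B = (\<lambda>t. 4*(1+1/e) * E_fun f L t + (1+e)/2 * max 0 (ln (L t)) + C)"
    have E0: "((\<lambda>t. E_fun f L t / t) \<longlongrightarrow> 0) at_top" using III unfolding cond_III_def .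
    have M0: "((\<lambda>t. max 0 (ln (L t)) / t) \<longlongrightarrow> 0) at_top" by (rule lsetup.growth[OF loc III])
    have C0: "((\<lambda>t. C / t) \<longlongrightarrow> 0) at_top"
      by (rule tendsto_divide_0[OF tendsto_const]) (rule filterlim_at_top_imp_at_infinity[OF filterlim_ident])
    have B0: "((\<lambda>t. 4*(1+1/e) * (E_fun f L t / t) + (1+e)/2 * (max 0 (ln (L t)) / t) + C / t) \<longlongrightarrow> 0) at_top"
    proof -
      have a1: "((\<lambda>t. 4*(1+1/e) * (E_fun f L t / t)) \<longlongrightarrow> 0) at_top" by (rule tendsto_mult_right_zero[OF E0])
      have a2: "((\<lambda>t. (1+e)/2 * (max 0 (ln (L t)) / t)) \<longlongrightarrow> 0) at_top" by (rule tendsto_mult_right_zero[OF M0])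
      show ?thesis by (rule tendsto_add_zero[OF tendsto_add_zero[OF a1 a2] C0])
    qed
    have ev2: "eventually (\<lambda>t. 4*(1+1/e) * (E_fun f L t / t) + (1+e)/2 * (max 0 (ln (L t)) / t) + C / t < \<delta>/4) at_top"
      by (rule order_tendstoD(2)[OF B0]) (use \<delta> in simp)
    have "eventually (\<lambda>t. ereal y1 < ereal (An t)) at_top"
      using ev1 ev2 eventually_gt_at_top[of 0]
    proof eventually_elim
      case (elim t)
      have t: "t > 0" using elim by simp
      have Bt: "B t / t < \<delta>/4" using elim(2) unfolding B_def by (simp add: add_divide_distrib)
      have ineq: "t * An t \<ge> t * ((1+e) * Ao t - e*r - s/2) - B t"
        using lsetup.Sineq[OF loc t e sv, of r] unfolding An_def Ao_def B_def C_def LtE ftE by simp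
      have d: "An t \<ge> (1+e) * Ao t - e*r - s/2 - B t / t" by (rule div_aux[OF t ineq])
      have a1: "Ao t > s - \<delta>/4" using elim(1) by simp
      have "e * Ao t \<ge> 0" using a1 e \<delta> by (intro mult_nonneg_nonneg) auto
      then have "(1+e) * Ao t \<ge> Ao t" by (simp add: algebra_simps)
      then have "An t > s/2 - 3*\<delta>/4" using d a1 er Bt by linarith
      then have "An t > y1" using y1(3) unfolding \<delta>_def by argo
      then show ?case by simp
    qed
    then show "eventually (\<lambda>t. y < ereal (An t)) at_top"
      by eventually_elim (use y1(1) in \<open>auto intro: le_less_trans\<close>)
  qed
  have up: "eventually (\<lambda>t. An t < r + 1) at_top"
  proof -
    define C2 where "C2 = (ln (L0 + 1) - ln (lsetup.Lt L L0 0)) / 2"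
    have C0: "((\<lambda>t. C2 / t) \<longlongrightarrow> 0) at_top"
      by (rule tendsto_divide_0[OF tendsto_const]) (rule filterlim_at_top_imp_at_infinity[OF filterlim_ident])
    have "eventually (\<lambda>t. C2 / t < 1) at_top" by (rule order_tendstoD(2)[OF C0]) simp
    then show ?thesis using eventually_gt_at_top[of 0]
    proof eventually_elim
      case (elim t)
      have t: "t > 0" using elim by simp
      have "t * An t \<le> r * t + C2" using lsetup.Supper[OF loc t, of r] unfolding An_def C2_def LtE ftE .
      then have "t * An t \<ge> t * (An t) - 0" by simp
      have "An t \<le> r + C2 / t"
      proof -
        have "An t - (r + C2/t) = (t * An t - (r * t + C2)) / t" using t by (simp add: field_simps)
        also have "\<dots> \<le> 0" using \<open>t * An t \<le> r * t + C2\<close> t by (simp add: divide_nonpos_pos)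
        finally show ?thesis by simp
      qed
      then show ?case using elim by linarith
    qed
  qed
  have notinf: "S_val r ft Lt \<noteq> \<infinity>"
  proof
    assume inf: "S_val r ft Lt = \<infinity>"
    have "ereal (r + 2) \<le> Liminf at_top (\<lambda>t. ereal (An t))" using inf Sn by simp
    then have "\<forall>y<ereal (r + 2). eventually (\<lambda>t. y < ereal (An t)) at_top" unfolding le_Liminf_iff .
    moreover have "ereal (r + 1) < ereal (r + 2)" by simp
    ultimately have ev: "eventually (\<lambda>t. ereal (r + 1) < ereal (An t)) at_top" by blast
    obtain N where "\<forall>n\<ge>N. ereal (r + 1) < ereal (An n) \<and> An n < r + 1"
      using eventually_conj[OF ev up] unfolding eventually_at_top_linorder by blast
    then show False by auto
  qed
  have half: "S_val r f L / 2 = ereal (s/2)" using Sd by simp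
  show ?thesis
  proof (intro conjI)
    show "\<forall>t\<ge>0. Lt t > 0" unfolding LtE using lsetup.Lt_pos[OF loc] by auto
    show "cond_II ft Lt" unfolding cond_II_def LtE ftE using lsetup.ft_facts(1)[OF loc] lsetup.Lt_facts(1)[OF loc] by simp
    show "cond_III ft Lt" unfolding LtE ftE by (rule lsetup.condIII_new[OF loc III])
    show "cond_IV r ft Lt" unfolding cond_IV_def using low notinf s
      by (cases "S_val r ft Lt") auto
    show "S_val r ft Lt \<ge> S_val r f L / 2" unfolding half by (rule low)
    show "S_val r ft Lt > 0" using low s by (metis ereal_less(2) half_gt_zero order_less_le_trans)
  qed
qed


end
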